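(* Let $X$ be a supertropical semiring and $a\in X$. (1) The fiber $\nu^{-1}(a)$ is non-empty if and only if $a\in\nu X$; in this case $a$ is the largest element of $\nu^{-1}(a)$ with respect to the intrinsic order. (2) Any two distinct elements of $\nu^{-1}(a)\setminus\{a\}$ are incomparable in the intrinsic order.
   Context: A semiring $(X,+,0,\cdot)$: $(X,+,0)$ commutative monoid, $(X,\cdot)$ semigroup, distributivity, $0$ absorbing. Intrinsic order: $a\le b$ iff $a+x=b$ for some $x$. $\nu:X\to X$, $\nu(x)=x+x$; $\nu X=\{a: a=a+a\}$. A supertropical semiring is a unital commutative semiring with $2=4$ (where $n=1+\dots+1$), such that $a+b\in\{a,b\}$ whenever $\nu(a)\ne\nu(b)$, and $a+b=\nu(a)$ whenever $\nu(a)=\nu(b)$. *)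

theory Defs
  imports Main
begin

definition ileq :: "'a::comm_semiring_1 \<Rightarrow> 'a \<Rightarrow> bool" where
  "ileq a b \<longleftrightarrow> (\<exists>x. a + x = b)"

definition nu :: "'a::comm_semiring_1 \<Rightarrow> 'a" where
  "nu x = x + x"

definition nuX :: "'a::comm_semiring_1 set" where
  "nuX = {a. a = a + a}"

definition supertropical :: "'a::comm_semiring_1 itself \<Rightarrow> bool" where
  "supertropical _ \<longleftrightarrow>
     (2::'a) = 4 \<and>
     (\<forall>a b::'a. nu a \<noteq> nu b \<longrightarrow> a + b = a \<or> a + b = b) \<and>
     (\<forall>a b::'a. nu a = nu b \<longrightarrow> a + b = nu a)"

end

theory Submission
  imports Defs
begin

lemma nunu:
  fixes x :: "'a::comm_semiring_1"
  assumes "supertropical TYPE('a)"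
  shows "nu x + nu x = nu x"
proof -
  have 24: "(2::'a) = 4" using assms by (simp add: supertropical_def)
  have n: "nu x = 2 * x" by (simp add: nu_def mult_2)
  have "nu x + nu x = 2 * (2 * x)" by (simp only: n mult_2)
  also have "\<dots> = (2 * 2) * x" by (simp only: mult.assoc)
  also have "\<dots> = 4 * x" by simp
  also have "\<dots> = 2 * x" using 24 by simp
  also have "\<dots> = nu x" by (simp add: nu_def mult_2)
  finally show ?thesis .
qed

theorem lemma5p4:
  fixes a :: "'a::comm_semiring_1"
  assumes "supertropical TYPE('a)"
  shows "({x. nu x = a} \<noteq> {} \<longleftrightarrow> a \<in> nuX)
    \<and> (a \<in> nuX \<longrightarrow> a \<in> {x. nu x = a} \<and> (\<forall>y \<in> {x. nu x = a}. ileq y a))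
    \<and> (\<forall>x \<in> {x. nu x = a} - {a}. \<forall>y \<in> {x. nu x = a} - {a}.
          x \<noteq> y \<longrightarrow> \<not> ileq x y \<and> \<not> ileq y x)"
proof -
  have A: "\<forall>a b::'a. nu a \<noteq> nu b \<longrightarrow> a + b = a \<or> a + b = b"
   and B: "\<forall>a b::'a. nu a = nu b \<longrightarrow> a + b = nu a"
    using assms by (auto simp: supertropical_def)
  have P1: "{x. nu x = a} \<noteq> {} \<longleftrightarrow> a \<in> nuX"
  proof
    assume "{x. nu x = a} \<noteq> {}"
    then obtain x where "nu x = a" by auto
    then show "a \<in> nuX" using nunu[OF assms, of x] by (auto simp: nuX_def)
  next
    assume "a \<in> nuX" then have "nu a = a" by (simp add: nuX_def nu_def)
    then show "{x. nu x = a} \<noteq> {}" by auto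
  qed
  have P2: "a \<in> nuX \<longrightarrow> a \<in> {x. nu x = a} \<and> (\<forall>y \<in> {x. nu x = a}. ileq y a)"
    by (auto simp: nuX_def nu_def ileq_def)
  have key: "\<not> ileq x y" if "nu x = a" "nu y = a" "x \<noteq> a" "y \<noteq> a" "x \<noteq> y" for x y
  proof
    assume "ileq x y"
    then obtain z where z: "x + z = y" by (auto simp: ileq_def)
    show False
    proof (cases "nu x = nu z")
      case True then show False using B z that by metis
    next
      case False
      then have "x + z = x \<or> x + z = z" using A by blast
      then show False using z that False by auto
    qed
  qed
  show ?thesis using P1 P2 key by blast
qed

end
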